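(* Let $X$ be a separable metric space endowed with the universal $\sigma$-algebra $\mathscr U(X)$, and let $\mathbb P$ be the completion of a Borel probability measure on $X$ restricted to $\mathscr U(X)$. Assume that $\mathbb P_n$ converges weakly to $\mathbb Q$ (the completion of a Borel measure restricted to $\mathscr U(X)$), where $\mathbb P_n(E)=\mathbb P(E\cap A_n)$ for a sequence of sets $A_n\in\mathscr U(X)$. Then for every measurable set $E\in\mathscr U(X)$, $\lim_{n\to\infty}\mathbb P_n(E)=\mathbb Q(E)$.
   Context: $\mathscr U(X)$ is the intersection over all $\sigma$-finite Borel measures $\nu$ on $X$ of the $\nu$-completion $\sigma$-algebras. Weak convergence means $\int f\,d\mathbb P_n\to\int f\,d\mathbb Q$ for all bounded continuous $f$. *)

theory Defs
  imports "HOL-Probability.Probability"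
begin

definition universal_sets :: "'a::topological_space set set" where
  "universal_sets = \<Inter> {sets (completion \<nu>) | \<nu>. sets \<nu> = sets (borel :: 'a measure) \<and> sigma_finite_measure \<nu>}"

definition univ_restrict :: "'a::topological_space measure \<Rightarrow> 'a measure" where
  "univ_restrict \<mu> = measure_of UNIV universal_sets (emeasure (completion \<mu>))"

definition trace_meas :: "'a::topological_space measure \<Rightarrow> 'a set \<Rightarrow> 'a measure" where
  "trace_meas P A = measure_of UNIV universal_sets (\<lambda>E. emeasure P (E \<inter> A))"

definition weak_conv_bc :: "(nat \<Rightarrow> 'a::topological_space measure) \<Rightarrow> 'a measure \<Rightarrow> bool" where
  "weak_conv_bc Ps Q \<longleftrightarrow> (\<forall>f :: 'a \<Rightarrow> real. continuous_on UNIV f \<and> bounded (range f) \<longrightarrow>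
      (\<lambda>n. integral\<^sup>L (Ps n) f) \<longlonglongrightarrow> integral\<^sup>L Q f)"

end

theory Submission
  imports Defs
begin

lemma univ_iff: "x \<in> universal_sets \<longleftrightarrow> (\<forall>\<nu>::'a::topological_space measure. sets \<nu> = sets borel \<and> sigma_finite_measure \<nu> \<longrightarrow> x \<in> sets (completion \<nu>))"
  unfolding universal_sets_def by blast

lemma univ_sigma: "sigma_algebra (UNIV::'a::topological_space set) universal_sets"
  unfolding sigma_algebra_iff2
proof (intro conjI allI impI ballI)
  fix s :: "'a set" assume s: "s \<in> universal_sets"
  show "UNIV - s \<in> universal_sets"
    unfolding univ_iff
  proof (intro allI impI)
    fix \<nu> :: "'a measure" assume h: "sets \<nu> = sets borel \<and> sigma_finite_measure \<nu>"
    then have "s \<in> sets (completion \<nu>)" using s univ_iff by blast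
    then have "space (completion \<nu>) - s \<in> sets (completion \<nu>)" by auto
    moreover have "space (completion \<nu>) = UNIV" using sets_eq_imp_space_eq[of \<nu> borel] h by simp
    ultimately show "UNIV - s \<in> sets (completion \<nu>)" by simp
  qed
next
  fix A :: "nat \<Rightarrow> 'a set"
  assume A: "range A \<subseteq> universal_sets"
  show "(\<Union>i. A i) \<in> universal_sets"
    unfolding univ_iff
  proof (intro allI impI)
    fix \<nu> :: "'a measure" assume h: "sets \<nu> = sets borel \<and> sigma_finite_measure \<nu>"
    then have "range A \<subseteq> sets (completion \<nu>)" using A univ_iff by blast
    then show "(\<Union>i. A i) \<in> sets (completion \<nu>)" by auto
  qed
qed (auto simp: univ_iff)

lemma borel_sub_univ: "sets (borel::'a::topological_space measure) \<subseteq> universal_sets"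
  unfolding universal_sets_def by auto

lemma univ_sub_completion:
  assumes "sets M = sets (borel::'a::topological_space measure)" "finite_measure M"
  shows "universal_sets \<subseteq> sets (completion M)"
  unfolding universal_sets_def using assms finite_measure.axioms(1)[OF assms(2)] by blast

lemma univ_restrict_props:
  fixes M :: "'a::topological_space measure"
  assumes "sets M = sets borel" "finite_measure M"
  shows "sets (univ_restrict M) = universal_sets"
    and "space (univ_restrict M) = UNIV"
    and "E \<in> universal_sets \<Longrightarrow> emeasure (univ_restrict M) E = emeasure (completion M) E"
    and "finite_measure (univ_restrict M)"
proof -
  have sa: "sigma_algebra UNIV universal_sets" by (rule univ_sigma)
  show s: "sets (univ_restrict M) = universal_sets"
    unfolding univ_restrict_def by (rule sigma_algebra.sets_measure_of_eq[OF sa])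
  show sp: "space (univ_restrict M) = UNIV"
    unfolding univ_restrict_def by (rule sigma_algebra.space_measure_of_eq[OF sa])
  have sub: "universal_sets \<subseteq> sets (completion M)" by (rule univ_sub_completion[OF assms])
  have pos: "positive universal_sets (emeasure (completion M))"
    by (simp add: positive_def)
  have ca: "countably_additive universal_sets (emeasure (completion M))"
    unfolding countably_additive_def
  proof (intro allI impI)
    fix A :: "nat \<Rightarrow> 'a set" assume "range A \<subseteq> universal_sets" "disjoint_family A"
    then show "(\<Sum>i. emeasure (completion M) (A i)) = emeasure (completion M) (\<Union>i. A i)"
      using sub by (intro suminf_emeasure) auto
  qed
  show em: "E \<in> universal_sets \<Longrightarrow> emeasure (univ_restrict M) E = emeasure (completion M) E" for E
    unfolding univ_restrict_def by (rule emeasure_measure_of_sigma[OF sa pos ca])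
  have "emeasure (univ_restrict M) UNIV = emeasure (completion M) UNIV"
    using em[of UNIV] by (metis sets.top sp s)
  also have "\<dots> = emeasure M (space M)"
  proof -
    have "UNIV = space M" using sets_eq_imp_space_eq[OF assms(1)] by simp
    moreover have "emeasure (completion M) (space M) = emeasure M (space M)"
      by auto
    ultimately show ?thesis by simp
  qed
  finally show "finite_measure (univ_restrict M)"
    using assms(2) by (intro finite_measureI) (simp add: sp finite_measure.emeasure_finite)
qed

lemma trace_density:
  fixes P :: "'a::topological_space measure"
  assumes "sets P = universal_sets" "A \<in> universal_sets"
  shows "trace_meas P A = density P (indicator A)"
proof -
  have sp: "space P = UNIV" using assms(1) univ_sigma
    by (metis sets.sigma_sets_eq sets.space_closed sets_eq_imp_space_eq sigma_algebra.sets_measure_of_eq sigma_algebra.space_measure_of_eq)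
  let ?D = "density P (indicator A)"
  have "trace_meas P A = measure_of UNIV universal_sets (emeasure ?D)"
    unfolding trace_meas_def
  proof (rule measure_of_eq)
    show "universal_sets \<subseteq> Pow UNIV" by simp
    fix E :: "'a set" assume "E \<in> sigma_sets UNIV universal_sets"
    then have "E \<in> universal_sets" by (simp add: sigma_algebra.sigma_sets_eq[OF univ_sigma])
    then show "emeasure P (E \<inter> A) = emeasure ?D E"
      using assms by (subst emeasure_restricted) (auto simp: Int_commute)
  qed
  also have "\<dots> = measure_of (space ?D) (sets ?D) (emeasure ?D)"
    using sp assms by simp
  also have "\<dots> = ?D" by (rule measure_of_of_measure)
  finally show ?thesis .
qed

lemma approx_lim:
  fixes x :: "nat \<Rightarrow> real" and c :: "nat \<Rightarrow> nat \<Rightarrow> real"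
  assumes b: "\<And>k n. \<bar>x n - L\<bar> \<le> e k + \<bar>c k n - d k\<bar>"
    and c: "\<And>k. c k \<longlonglongrightarrow> d k" and e: "e \<longlonglongrightarrow> 0"
  shows "x \<longlonglongrightarrow> L"
proof (rule LIMSEQ_I)
  fix r :: real assume r: "0 < r"
  have "\<forall>\<^sub>F k in sequentially. \<bar>e k\<bar> < r/2"
    using e r by (auto simp: tendsto_iff dist_real_def dest: spec[of _ "r/2"])
  then obtain k where k: "\<bar>e k\<bar> < r/2" by (auto simp: eventually_sequentially)
  have "\<forall>\<^sub>F n in sequentially. \<bar>c k n - d k\<bar> < r/2"
    using c[of k] r by (auto simp: tendsto_iff dist_real_def dest: spec[of _ "r/2"])
  then obtain N where N: "\<And>n. n \<ge> N \<Longrightarrow> \<bar>c k n - d k\<bar> < r/2" by (auto simp: eventually_sequentially)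
  show "\<exists>no. \<forall>n\<ge>no. norm (x n - L) < r"
  proof (intro exI allI impI)
    fix n assume "N \<le> n"
    have h1: "\<bar>x n - L\<bar> \<le> e k + \<bar>c k n - d k\<bar>" by (rule b)
    have h2: "e k \<le> \<bar>e k\<bar>" by (rule abs_ge_self)
    have h3: "\<bar>c k n - d k\<bar> < r/2" by (rule N[OF \<open>N \<le> n\<close>])
    have "\<bar>x n - L\<bar> < r" using h1 h2 h3 k by linarith
    then show "norm (x n - L) < r" by (simp only: real_norm_def)
  qed
qed

lemma (in finite_measure) union_split:
  fixes B :: "nat \<Rightarrow> 'a set" and k :: nat
  assumes B: "range B \<subseteq> sets M" "disjoint_family B" and C: "C \<in> sets M"
  shows "measure M ((\<Union>i. B i) \<inter> C) = (\<Sum>i<k. measure M (B i \<inter> C)) + measure M ((\<Union>i. B (i + k)) \<inter> C)"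
proof -
  have eq: "(\<Union>i. B i) \<inter> C = (\<Union>i\<in>{..<k}. B i \<inter> C) \<union> ((\<Union>i. B (i + k)) \<inter> C)"
  proof (intro equalityI subsetI)
    fix x assume "x \<in> (\<Union>i. B i) \<inter> C"
    then obtain i where xi: "x \<in> B i" "x \<in> C" by blast
    show "x \<in> (\<Union>i\<in>{..<k}. B i \<inter> C) \<union> ((\<Union>i. B (i + k)) \<inter> C)"
    proof (cases "i < k")
      case True then show ?thesis using xi by blast
    next
      case False
      then have "x \<in> B ((i - k) + k)" using xi by simp
      then show ?thesis using xi by blast
    qed
  next
    fix x assume "x \<in> (\<Union>i\<in>{..<k}. B i \<inter> C) \<union> ((\<Union>i. B (i + k)) \<inter> C)"
    then show "x \<in> (\<Union>i. B i) \<inter> C" by blast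
  qed
  have no: False if "i < k" "x \<in> B i" "x \<in> B (j + k)" for i j x
  proof -
    have "i \<noteq> j + k" using that(1) by simp
    then have "B i \<inter> B (j + k) = {}" using B(2) by (simp add: disjoint_family_on_def)
    then show False using that by blast
  qed
  have dis: "(\<Union>i\<in>{..<k}. B i \<inter> C) \<inter> ((\<Union>i. B (i + k)) \<inter> C) = {}"
    using no by blast
  have m1: "(\<Union>i\<in>{..<k}. B i \<inter> C) \<in> sets M" using B C by auto
  have m2: "(\<Union>i. B (i + k)) \<inter> C \<in> sets M" using B C by auto
  have "measure M ((\<Union>i. B i) \<inter> C) = measure M (\<Union>i\<in>{..<k}. B i \<inter> C) + measure M ((\<Union>i. B (i + k)) \<inter> C)"
    unfolding eq by (rule finite_measure_Union[OF m1 m2 dis])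
  also have "measure M (\<Union>i\<in>{..<k}. B i \<inter> C) = (\<Sum>i<k. measure M (B i \<inter> C))"
    using B C by (intro finite_measure_finite_Union) (auto simp: disjoint_family_on_def)
  finally show ?thesis .
qed

lemma (in finite_measure) tail_zero:
  assumes B: "range B \<subseteq> sets M" "disjoint_family B"
  shows "(\<lambda>k. measure M (\<Union>i. B (i + k))) \<longlonglongrightarrow> 0"
proof -
  have "(\<lambda>k. measure M (\<Union>i. B (i + k))) \<longlonglongrightarrow> measure M (\<Inter>k. \<Union>i. B (i + k))"
  proof (rule finite_Lim_measure_decseq)
    show "range (\<lambda>k. \<Union>i. B (i + k)) \<subseteq> sets M" using B by auto
    show "decseq (\<lambda>k. \<Union>i. B (i + k))"
      unfolding decseq_def
    proof (intro allI impI subsetI)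
      fix m n x assume "m \<le> n" "x \<in> (\<Union>i. B (i + n))"
      then obtain i where "x \<in> B (i + n)" by auto
      then have "x \<in> B ((i + n - m) + m)" using \<open>m \<le> n\<close> by simp
      then show "x \<in> (\<Union>i. B (i + m))" by blast
    qed
  qed
  moreover have "(\<Inter>k. \<Union>i. B (i + k)) = {}"
  proof (rule ccontr)
    assume "(\<Inter>k. \<Union>i. B (i + k)) \<noteq> {}"
    then obtain x where x0: "x \<in> (\<Inter>k. \<Union>i. B (i + k))" by blast
    have x: "x \<in> (\<Union>i. B (i + k))" for k using x0 by blast
    from x[of 0] obtain j where j: "x \<in> B j" by auto
    from x[of "Suc j"] obtain i where i: "x \<in> B (i + Suc j)" by auto
    have "j \<noteq> i + Suc j" by simp
    then have "B j \<inter> B (i + Suc j) = {}" using B(2) by (simp add: disjoint_family_on_def)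
    then show False using i j by blast
  qed
  ultimately show ?thesis by simp
qed

lemma meas_lift:
  fixes f :: "'a::topological_space \<Rightarrow> real"
  assumes "sets M = universal_sets" "f \<in> borel_measurable borel"
  shows "f \<in> borel_measurable M"
proof -
  have sp: "space M = UNIV"
    using assms(1) univ_sigma
    by (metis sets_eq_imp_space_eq sigma_algebra.sets_measure_of_eq sigma_algebra.space_measure_of_eq)
  have "measurable borel (borel::real measure) \<subseteq> measurable M borel"
    by (rule measurable_mono) (auto simp: sp assms(1) borel_sub_univ)
  then show ?thesis using assms(2) by blast
qed

lemma aux2:
  fixes p c a q d :: real
  shows "p \<le> c \<Longrightarrow> c - p \<le> a \<Longrightarrow> q \<le> d \<Longrightarrow> \<bar>p - q\<bar> \<le> (a + (d - q)) + \<bar>c - d\<bar>"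
  by (simp add: abs_le_iff abs_if)

context
  fixes P Q :: "'a::metric_space measure" and A :: "nat \<Rightarrow> 'a set"
  assumes fP: "finite_measure P" and fQ: "finite_measure Q"
    and sP: "sets P = universal_sets" and sQ: "sets Q = universal_sets"
    and An: "\<And>n. A n \<in> universal_sets"
    and H: "\<And>f::'a \<Rightarrow> real. continuous_on UNIV f \<Longrightarrow> bounded (range f) \<Longrightarrow>
       (\<lambda>n. \<integral>x. indicator (A n) x * f x \<partial>P) \<longlonglongrightarrow> (\<integral>x. f x \<partial>Q)"
begin

lemma spP: "space P = UNIV" using sP univ_sigma
  by (metis sets_eq_imp_space_eq sigma_algebra.sets_measure_of_eq sigma_algebra.space_measure_of_eq)
lemma spQ: "space Q = UNIV" using sQ univ_sigma
  by (metis sets_eq_imp_space_eq sigma_algebra.sets_measure_of_eq sigma_algebra.space_measure_of_eq)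

lemma closed_case:
  assumes F: "closed F"
  shows "(\<lambda>n. measure P (F \<inter> A n)) \<longlonglongrightarrow> measure Q F"
proof (cases "F = {}")
  case True then show ?thesis by simp
next
  case False
  interpret P: finite_measure P by (rule fP)
  interpret Q: finite_measure Q by (rule fQ)
  define f where "f k x = max 0 (1 - real k * infdist x F)" for k x
  have FP: "F \<in> sets P" using F sP borel_sub_univ borel_closed by blast
  have FQ: "F \<in> sets Q" using F sQ borel_sub_univ borel_closed by blast
  have AP: "A n \<in> sets P" for n using An sP by simp
  have cont: "continuous_on UNIV (f k)" for k
    unfolding f_def by (intro continuous_intros)
  have f01: "0 \<le> f k x" "f k x \<le> 1" for k x
    unfolding f_def using infdist_nonneg[of x F] by auto
  have bnd: "bounded (range (f k))" for k
    unfolding bounded_iff using f01 by (intro exI[of _ 1]) auto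
  have fge: "indicator F x \<le> f k x" for k x
  proof (cases "x \<in> F")
    case True
    then have "infdist x F = 0" using in_closed_iff_infdist_zero[OF F False] by simp
    then show ?thesis using True by (simp add: f_def)
  qed (simp add: f01)
  have feq1: "f k x = 1" if "x \<in> F" for k x
  proof -
    have "infdist x F = 0" using that in_closed_iff_infdist_zero[OF F False] by simp
    then show ?thesis by (simp add: f_def)
  qed
  have flim: "(\<lambda>k. f k x) \<longlonglongrightarrow> indicator F x" for x
  proof (cases "x \<in> F")
    case True
    then have "infdist x F = 0" using in_closed_iff_infdist_zero[OF F False] by simp
    then show ?thesis using True by (simp add: f_def)
  next
    case nF: False
    then have pos: "infdist x F > 0" using in_closed_iff_infdist_zero[OF F \<open>F \<noteq> {}\<close>] infdist_nonneg[of x F] by auto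
    obtain K :: nat where K: "1 / infdist x F < K" using reals_Archimedean2 by blast
    have "f k x = 0" if "k \<ge> K" for k
    proof -
      have "1 < real K * infdist x F" using K pos by (simp add: field_simps)
      also have "\<dots> \<le> real k * infdist x F" using that pos by (intro mult_right_mono) auto
      finally show ?thesis by (simp add: f_def)
    qed
    then have "\<forall>\<^sub>F k in sequentially. f k x = 0" by (auto simp: eventually_sequentially)
    then have "(\<lambda>k. f k x) \<longlonglongrightarrow> 0" by (rule tendsto_eventually)
    then show ?thesis using nF by simp
  qed
  have fmP: "f k \<in> borel_measurable P" for k using meas_lift[OF sP borel_measurable_continuous_onI[OF cont]] .
  have fmQ: "f k \<in> borel_measurable Q" for k using meas_lift[OF sQ borel_measurable_continuous_onI[OF cont]] .
  define a where "a = (\<lambda>k. (\<integral>x. f k x \<partial>P) - measure P F)"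
  define b where "b = (\<lambda>k. (\<integral>x. f k x \<partial>Q) - measure Q F)"
  have intP: "(\<lambda>k. \<integral>x. f k x \<partial>P) \<longlonglongrightarrow> (\<integral>x. indicator F x \<partial>P)"
    by (rule integral_dominated_convergence[where w="\<lambda>_. 1"]) (use FP fmP flim f01 in auto)
  have intQ: "(\<lambda>k. \<integral>x. f k x \<partial>Q) \<longlonglongrightarrow> (\<integral>x. indicator F x \<partial>Q)"
    by (rule integral_dominated_convergence[where w="\<lambda>_. 1"]) (use FQ fmQ flim f01 in auto)
  have a0: "a \<longlonglongrightarrow> 0"
    using tendsto_diff[OF intP tendsto_const[of "measure P F"]] FP spP by (simp add: a_def)
  have b0: "b \<longlonglongrightarrow> 0"
    using tendsto_diff[OF intQ tendsto_const[of "measure Q F"]] FQ spQ by (simp add: b_def)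
  have iP: "integrable P (\<lambda>x. g x)" if "g \<in> borel_measurable P" "\<And>x. \<bar>g x\<bar> \<le> 1" for g :: "'a \<Rightarrow> real"
    by (rule P.integrable_const_bound[where B=1]) (use that in auto)
  have iQ: "integrable Q (\<lambda>x. g x)" if "g \<in> borel_measurable Q" "\<And>x. \<bar>g x\<bar> \<le> 1" for g :: "'a \<Rightarrow> real"
    by (rule Q.integrable_const_bound[where B=1]) (use that in auto)
  have bound: "\<bar>measure P (F \<inter> A n) - measure Q F\<bar> \<le> (a k + b k) +
      \<bar>(\<integral>x. indicator (A n) x * f k x \<partial>P) - (\<integral>x. f k x \<partial>Q)\<bar>" for k n
  proof -
    have ieq: "(\<lambda>x. indicator (A n) x * indicator F x :: real) = indicator (F \<inter> A n)"
      by (auto simp: indicator_def fun_eq_iff)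
    have FAP: "F \<inter> A n \<in> sets P" using FP AP by (rule sets.Int)
    have m1: "measure P (F \<inter> A n) = (\<integral>x. indicator (A n) x * indicator F x \<partial>P)"
      unfolding ieq integral_indicator using spP by simp
    have mI: "(\<lambda>x. indicator (A n) x * g x) \<in> borel_measurable P" if "g \<in> borel_measurable P" for g :: "'a \<Rightarrow> real"
      by (rule borel_measurable_times[OF borel_measurable_indicator[OF AP] that])
    have i1: "integrable P (\<lambda>x. indicator (A n) x * (indicator F x :: real))"
      by (rule iP[OF mI[OF borel_measurable_indicator[OF FP]]]) (simp add: indicator_def)
    have i2: "integrable P (\<lambda>x. indicator (A n) x * f k x)"
      by (rule iP[OF mI[OF fmP]]) (simp add: indicator_def abs_of_nonneg f01)
    have i3: "integrable P (f k)" by (rule iP[OF fmP]) (simp add: abs_of_nonneg f01)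
    have i4: "integrable P (indicator F :: 'a \<Rightarrow> real)"
      by (rule iP[OF borel_measurable_indicator[OF FP]]) (simp add: indicator_def)
    have low: "measure P (F \<inter> A n) \<le> (\<integral>x. indicator (A n) x * f k x \<partial>P)"
      unfolding m1 by (rule integral_mono[OF i1 i2]) (auto simp: feq1 f01 indicator_def)
    have "(\<integral>x. indicator (A n) x * f k x \<partial>P) - measure P (F \<inter> A n)
        = (\<integral>x. indicator (A n) x * f k x - indicator (A n) x * indicator F x \<partial>P)"
      unfolding m1 by (rule Bochner_Integration.integral_diff[OF i2 i1, symmetric])
    also have "\<dots> \<le> (\<integral>x. f k x - indicator F x \<partial>P)"
      by (rule integral_mono[OF Bochner_Integration.integrable_diff[OF i2 i1] Bochner_Integration.integrable_diff[OF i3 i4]])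
         (auto simp: feq1 f01 indicator_def)
    also have "\<dots> = a k" unfolding a_def using Bochner_Integration.integral_diff[OF i3 i4] FP spP by simp
    finally have up: "(\<integral>x. indicator (A n) x * f k x \<partial>P) - measure P (F \<inter> A n) \<le> a k" .
    have i5: "integrable Q (f k)" by (rule iQ[OF fmQ]) (simp add: abs_of_nonneg f01)
    have i6: "integrable Q (indicator F :: 'a \<Rightarrow> real)"
      by (rule iQ[OF borel_measurable_indicator[OF FQ]]) (simp add: indicator_def)
    have qd: "measure Q F \<le> (\<integral>x. f k x \<partial>Q)"
      using integral_mono[OF i6 i5] fge FQ spQ by simp
    show ?thesis unfolding b_def by (rule aux2[OF low up qd])
  qed
  show ?thesis
    by (rule approx_lim[OF bound H[OF cont bnd]]) (use tendsto_add[OF a0 b0] in simp)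
qed

end

lemma abs_bound_aux:
  fixes u v p p' q :: real
  shows "0 \<le> p \<Longrightarrow> p \<le> p' \<Longrightarrow> 0 \<le> q \<Longrightarrow> \<bar>u + p - (v + q)\<bar> \<le> p' + q + \<bar>u - v\<bar>"
  by arith

context
  fixes P Q :: "'a::metric_space measure" and A :: "nat \<Rightarrow> 'a set"
  assumes fP: "finite_measure P" and fQ: "finite_measure Q"
    and sP: "sets P = universal_sets" and sQ: "sets Q = universal_sets"
    and An: "\<And>n. A n \<in> universal_sets"
    and H: "\<And>f::'a \<Rightarrow> real. continuous_on UNIV f \<Longrightarrow> bounded (range f) \<Longrightarrow>
       (\<lambda>n. \<integral>x. indicator (A n) x * f x \<partial>P) \<longlonglongrightarrow> (\<integral>x. f x \<partial>Q)"
begin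

lemma borel_case:
  assumes B: "B \<in> sets (borel :: 'a measure)"
  shows "(\<lambda>n. measure P (B \<inter> A n)) \<longlonglongrightarrow> measure Q B"
proof -
  interpret P: finite_measure P by (rule fP)
  interpret Q: finite_measure Q by (rule fQ)
  have sb: "sets (borel :: 'a measure) = sigma_sets UNIV (Collect closed)"
    by (subst borel_eq_closed) (simp add: sets_measure_of)
  have inP: "X \<in> sets P" if "X \<in> sigma_sets UNIV (Collect closed)" for X
    using that sb sP borel_sub_univ by blast
  have inQ: "X \<in> sets Q" if "X \<in> sigma_sets UNIV (Collect closed)" for X
    using that sb sQ borel_sub_univ by blast
  have AP: "A n \<in> sets P" for n using An sP by simp
  have spq: "space Q = UNIV" by (rule spQ[OF fP fQ sP sQ An H])
  have UQ: "UNIV \<in> sets Q" using sets.top[of Q] spq by simp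
  have Bs: "B \<in> sigma_sets UNIV (Collect closed)" using B sb by simp
  have cl: "closed F \<Longrightarrow> (\<lambda>n. measure P (F \<inter> A n)) \<longlonglongrightarrow> measure Q F" for F
    by (rule closed_case[OF fP fQ sP sQ An H])
  have IS: "Int_stable (Collect closed :: 'a set set)" by (auto simp: Int_stable_def)
  have PW: "(Collect closed :: 'a set set) \<subseteq> Pow UNIV" by auto
  show ?thesis
  using IS PW Bs
  proof (induction rule: sigma_sets_induct_disjoint)
    case (basic F) then show ?case using cl by simp
  next
    case empty then show ?case by simp
  next
    case (compl X)
    have XP: "X \<in> sets P" and XQ: "X \<in> sets Q" using compl(1) inP inQ by auto
    have e1: "measure P ((UNIV - X) \<inter> A n) = measure P (UNIV \<inter> A n) - measure P (X \<inter> A n)" for n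
    proof -
      have "(UNIV - X) \<inter> A n = A n - (X \<inter> A n)" by auto
      then show ?thesis using P.finite_measure_Diff[of "A n" "X \<inter> A n"] XP AP by auto
    qed
    have e2: "measure Q (UNIV - X) = measure Q UNIV - measure Q X"
      using Q.finite_measure_Diff[OF UQ XQ] by simp
    show ?case unfolding e1 e2
      by (intro tendsto_diff cl compl(2)) simp
  next
    case (union X)
    have XP: "range X \<subseteq> sets P" and XQ: "range X \<subseteq> sets Q" using union(2) inP inQ by auto
    define T where "T = (\<lambda>k. \<Union>i. X (i + k))"
    have bnd: "\<bar>measure P ((\<Union>i. X i) \<inter> A n) - measure Q (\<Union>i. X i)\<bar>
          \<le> (measure P (T k) + measure Q (T k)) +
            \<bar>(\<Sum>i<k. measure P (X i \<inter> A n)) - (\<Sum>i<k. measure Q (X i))\<bar>" for k n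
    proof -
      have s1: "measure P ((\<Union>i. X i) \<inter> A n) = (\<Sum>i<k. measure P (X i \<inter> A n)) + measure P (T k \<inter> A n)"
        unfolding T_def by (rule P.union_split[OF XP union(1) AP])
      have s2: "measure Q ((\<Union>i. X i) \<inter> UNIV) = (\<Sum>i<k. measure Q (X i \<inter> UNIV)) + measure Q (T k \<inter> UNIV)"
        unfolding T_def by (rule Q.union_split[OF XQ union(1) UQ])
      have s2': "measure Q (\<Union>i. X i) = (\<Sum>i<k. measure Q (X i)) + measure Q (T k)"
        using s2 by (simp only: Int_UNIV_right)
      have TP: "T k \<in> sets P" unfolding T_def using XP by auto
      have t1: "measure P (T k \<inter> A n) \<le> measure P (T k)"
        by (rule P.finite_measure_mono[OF Int_lower1 TP])
      have t2: "0 \<le> measure P (T k \<inter> A n)" by (rule measure_nonneg)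
      have t3: "0 \<le> measure Q (T k)" by (rule measure_nonneg)
      show ?thesis
        unfolding s1 s2' by (rule abs_bound_aux[OF t2 t1 t3])
    qed
    have cc: "(\<lambda>n. \<Sum>i<k. measure P (X i \<inter> A n)) \<longlonglongrightarrow> (\<Sum>i<k. measure Q (X i))" for k
      by (rule tendsto_sum) (rule union(3))
    have ee: "(\<lambda>k. measure P (T k) + measure Q (T k)) \<longlonglongrightarrow> 0"
      using tendsto_add[OF P.tail_zero[OF XP union(1)] Q.tail_zero[OF XQ union(1)]] unfolding T_def by simp
    show ?case by (rule approx_lim[OF bnd cc ee])
  qed
qed

end

theorem lemma11:
  fixes P0 Q0 :: "'a::metric_space measure" and A :: "nat \<Rightarrow> 'a set"
  assumes "separable_space (euclidean :: 'a topology)"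
    and "sets P0 = sets borel" and "prob_space P0"
    and "sets Q0 = sets borel" and "finite_measure Q0"
    and "\<And>n. A n \<in> universal_sets"
    and "weak_conv_bc (\<lambda>n. trace_meas (univ_restrict P0) (A n)) (univ_restrict Q0)"
    and "E \<in> universal_sets"
  shows "(\<lambda>n. emeasure (trace_meas (univ_restrict P0) (A n)) E) \<longlonglongrightarrow> emeasure (univ_restrict Q0) E"
proof -
  note sP0 = assms(2) and sQ0 = assms(4) and fQ0 = assms(5) and An = assms(6) and wc = assms(7) and E = assms(8)
  have fP0: "finite_measure P0" using assms(3) by (simp add: prob_space_def)
  define P where "P = univ_restrict P0"
  define Q where "Q = univ_restrict Q0"
  have sP: "sets P = universal_sets" and spP: "space P = UNIV" and fP: "finite_measure P"
    and emP: "\<And>X. X \<in> universal_sets \<Longrightarrow> emeasure P X = emeasure (completion P0) X"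
    using univ_restrict_props[OF sP0 fP0] unfolding P_def by auto
  have sQ: "sets Q = universal_sets" and spQ: "space Q = UNIV" and fQ: "finite_measure Q"
    and emQ: "\<And>X. X \<in> universal_sets \<Longrightarrow> emeasure Q X = emeasure (completion Q0) X"
    using univ_restrict_props[OF sQ0 fQ0] unfolding Q_def by auto
  interpret P: finite_measure P by (rule fP)
  interpret Q: finite_measure Q by (rule fQ)
  have tr: "trace_meas P (A n) = density P (indicator (A n))" for n
    by (rule trace_density[OF sP An])
  have AP: "A n \<in> sets P" for n using An sP by simp
  have H: "(\<lambda>n. \<integral>x. indicator (A n) x * f x \<partial>P) \<longlonglongrightarrow> (\<integral>x. f x \<partial>Q)"
    if "continuous_on UNIV f" "bounded (range f)" for f :: "'a \<Rightarrow> real"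
  proof -
    have fm: "f \<in> borel_measurable P"
      by (rule meas_lift[OF sP borel_measurable_continuous_onI[OF that(1)]])
    have "integral\<^sup>L (trace_meas P (A n)) f = (\<integral>x. indicator (A n) x * f x \<partial>P)" for n
    proof -
      have "(indicator (A n) :: 'a \<Rightarrow> ennreal) = (\<lambda>x. ennreal (indicator (A n) x))"
        by (auto simp: indicator_def fun_eq_iff)
      then have "integral\<^sup>L (trace_meas P (A n)) f = integral\<^sup>L (density P (\<lambda>x. ennreal (indicator (A n) x))) f"
        unfolding tr by simp
      also have "\<dots> = (\<integral>x. indicator (A n) x *\<^sub>R f x \<partial>P)"
        by (rule integral_density) (use fm AP in auto)
      finally show ?thesis by simp
    qed
    moreover have "(\<lambda>n. integral\<^sup>L (trace_meas P (A n)) f) \<longlonglongrightarrow> integral\<^sup>L Q f"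
      using wc that unfolding weak_conv_bc_def P_def Q_def by blast
    ultimately show ?thesis by simp
  qed
  have BC: "(\<lambda>n. measure P (B \<inter> A n)) \<longlonglongrightarrow> measure Q B" if "B \<in> sets borel" for B
    by (rule borel_case[OF fP fQ sP sQ An H that])
  have "E \<in> sets (completion P0)" using univ_sub_completion[OF sP0 fP0] E by blast
  then obtain S N N' where EN: "E = S \<union> N" "N \<subseteq> N'" "N' \<in> null_sets P0" "S \<in> sets P0"
    by (rule sets_completionE)
  have Sb: "S \<in> sets borel" using EN sP0 by simp
  have N'b: "N' \<in> sets borel" using EN sP0 by auto
  have SU: "S \<in> universal_sets" and N'U: "N' \<in> universal_sets"
    using Sb N'b borel_sub_univ by auto
  have PN': "measure P N' = 0"
  proof -
    have "emeasure P N' = emeasure (completion P0) N'" by (rule emP[OF N'U])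
    also have "\<dots> = emeasure P0 N'" using EN by auto
    also have "\<dots> = 0" using EN by auto
    finally show ?thesis by (simp add: measure_def)
  qed
  have QN': "measure Q N' = 0"
  proof -
    have le: "measure P (N' \<inter> A n) \<le> 0" for n
      using P.finite_measure_mono[OF Int_lower1, of N' "A n"] N'U sP PN' by simp
    have "measure Q N' \<le> 0"
      using BC[OF N'b] le by (intro LIMSEQ_le_const2) auto
    then show ?thesis using measure_nonneg[of Q N'] by linarith
  qed
  have EU: "E \<in> sets P" "E \<in> sets Q" using E sP sQ by auto
  have SP: "S \<in> sets P" "N' \<in> sets P" "S \<in> sets Q" "N' \<in> sets Q" using SU N'U sP sQ by auto
  have eqP: "measure P (E \<inter> A n) = measure P (S \<inter> A n)" for n
  proof -
    have m1: "measure P (S \<inter> A n) \<le> measure P (E \<inter> A n)"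
      by (rule P.finite_measure_mono) (use EN EU AP in auto)
    have "measure P (E \<inter> A n) \<le> measure P ((S \<inter> A n) \<union> N')"
      by (rule P.finite_measure_mono) (use EN in blast, intro sets.Un sets.Int SP AP)
    also have "\<dots> \<le> measure P (S \<inter> A n) + measure P N'"
      by (rule measure_Un_le) (intro sets.Int SP AP, rule SP)
    finally show ?thesis using m1 PN' by linarith
  qed
  have eqQ: "measure Q E = measure Q S"
  proof -
    have m1: "measure Q S \<le> measure Q E"
      by (rule Q.finite_measure_mono) (use EN EU in auto)
    have "measure Q E \<le> measure Q (S \<union> N')"
      by (rule Q.finite_measure_mono) (use EN in blast, intro sets.Un SP)
    also have "\<dots> \<le> measure Q S + measure Q N'"
      by (rule measure_Un_le) (rule SP, rule SP)
    finally show ?thesis using m1 QN' by linarith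
  qed
  have lim: "(\<lambda>n. measure P (E \<inter> A n)) \<longlonglongrightarrow> measure Q E"
    unfolding eqP eqQ by (rule BC[OF Sb])
  have e1: "emeasure (trace_meas P (A n)) E = ennreal (measure P (E \<inter> A n))" for n
  proof -
    have "emeasure (trace_meas P (A n)) E = emeasure P (A n \<inter> E)"
      unfolding tr by (rule emeasure_restricted[OF AP EU(1)])
    then show ?thesis by (simp add: P.emeasure_eq_measure Int_commute)
  qed
  have e2: "emeasure Q E = ennreal (measure Q E)" by (rule Q.emeasure_eq_measure)
  show ?thesis
    unfolding P_def[symmetric] Q_def[symmetric] e1 e2
    by (rule tendsto_ennrealI[OF lim])
qed

end
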